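(* Let $\mathcal{T}=\{0,1\}$, let $P\in\Delta_{\mathcal{T},\mathcal{X},\mathcal{Y}}$ with $P(T=0)>0$, $P(T=1)>0$, and suppose $Q^*\in\arg\max_{Q\in\Delta_P}H_Q(T\mid X,Y)$ lies in the relative interior of $\Delta_P$. If $\mathcal{X}_0=\mathcal{X}_1$ and $\mathcal{Y}_0\ne\mathcal{Y}_1$, then $T$ is conditionally independent of $X$ given $Y$ under $Q^*$. If $\mathcal{Y}_0=\mathcal{Y}_1$ and $\mathcal{X}_0\neq\mathcal{X}_1$, then $T$ is conditionally independent of $Y$ given $X$ under $Q^*$.
   Context: $T,X,Y$ are random variables with finite state spaces $\mathcal{T},\mathcal{X},\mathcal{Y}$; $\Delta_{\mathcal{T},\mathcal{X},\mathcal{Y}}$ is the set of all joint distributions on $\mathcal{T}\times\mathcal{X}\times\mathcal{Y}$. For $P\in\Delta_{\mathcal{T},\mathcal{X},\mathcal{Y}}$, $\Delta_P=\{Q\in\Delta_{\mathcal{T},\mathcal{X},\mathcal{Y}}: Q(X=x,T=t)=P(X=x,T=t),\ Q(Y=y,T=t)=P(Y=y,T=t)\ \forall x,y,t\}$. For $t\in\{0,1\}$: $\mathcal{X}_t=\{x: P(X=x\mid T=t)>0\}$, $\mathcal{Y}_t=\{y: P(Y=y\mid T=t)>0\}$. *)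

theory Defs
  imports "HOL-Analysis.Analysis"
begin

text \<open>A joint distribution of (T,X,Y) with T ranging over {0,1} (encoded as bool,
  False = 0, True = 1) and X, Y over finite types, viewed as a vector in the
  Euclidean space indexed by the finite set bool \<times> 'x \<times> 'y.\<close>

type_synonym ('x, 'y) jdist = "real ^ (bool \<times> 'x \<times> 'y)"

definition is_dist :: "('x::finite, 'y::finite) jdist \<Rightarrow> bool" where
  "is_dist Q \<longleftrightarrow> (\<forall>i. 0 \<le> Q $ i) \<and> (\<Sum>i\<in>UNIV. Q $ i) = 1"

definition pT :: "('x::finite, 'y::finite) jdist \<Rightarrow> bool \<Rightarrow> real" where
  "pT Q t = (\<Sum>x\<in>UNIV. \<Sum>y\<in>UNIV. Q $ (t, x, y))"

definition pX :: "('x::finite, 'y::finite) jdist \<Rightarrow> 'x \<Rightarrow> real" where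
  "pX Q x = (\<Sum>t\<in>UNIV. \<Sum>y\<in>UNIV. Q $ (t, x, y))"

definition pY :: "('x::finite, 'y::finite) jdist \<Rightarrow> 'y \<Rightarrow> real" where
  "pY Q y = (\<Sum>t\<in>UNIV. \<Sum>x\<in>UNIV. Q $ (t, x, y))"

definition pXT :: "('x::finite, 'y::finite) jdist \<Rightarrow> 'x \<Rightarrow> bool \<Rightarrow> real" where
  "pXT Q x t = (\<Sum>y\<in>UNIV. Q $ (t, x, y))"

definition pYT :: "('x::finite, 'y::finite) jdist \<Rightarrow> 'y \<Rightarrow> bool \<Rightarrow> real" where
  "pYT Q y t = (\<Sum>x\<in>UNIV. Q $ (t, x, y))"

definition pXY :: "('x::finite, 'y::finite) jdist \<Rightarrow> 'x \<Rightarrow> 'y \<Rightarrow> real" where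
  "pXY Q x y = (\<Sum>t\<in>UNIV. Q $ (t, x, y))"

definition Delta_P :: "('x::finite, 'y::finite) jdist \<Rightarrow> ('x, 'y) jdist set" where
  "Delta_P P = {Q. is_dist Q \<and> (\<forall>x t. pXT Q x t = pXT P x t) \<and> (\<forall>y t. pYT Q y t = pYT P y t)}"

definition cond_entropy_T_XY :: "('x::finite, 'y::finite) jdist \<Rightarrow> real" where
  "cond_entropy_T_XY Q =
     - (\<Sum>(t, x, y)\<in>UNIV. if Q $ (t, x, y) = 0 then 0
          else Q $ (t, x, y) * log 2 (Q $ (t, x, y) / pXY Q x y))"

definition supp_X :: "('x::finite, 'y::finite) jdist \<Rightarrow> bool \<Rightarrow> 'x set" where
  "supp_X P t = {x. pXT P x t / pT P t > 0}"

definition supp_Y :: "('x::finite, 'y::finite) jdist \<Rightarrow> bool \<Rightarrow> 'y set" where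
  "supp_Y P t = {y. pYT P y t / pT P t > 0}"

definition indep_T_X_given_Y :: "('x::finite, 'y::finite) jdist \<Rightarrow> bool" where
  "indep_T_X_given_Y Q \<longleftrightarrow>
     (\<forall>t x y. Q $ (t, x, y) * pY Q y = pYT Q y t * pXY Q x y)"

definition indep_T_Y_given_X :: "('x::finite, 'y::finite) jdist \<Rightarrow> bool" where
  "indep_T_Y_given_X Q \<longleftrightarrow>
     (\<forall>t x y. Q $ (t, x, y) * pX Q x = pXT Q x t * pXY Q x y)"

end

theory Submission
  imports Defs
begin

lemma sum_bool: "(\<Sum>t\<in>(UNIV::bool set). f t) = f True + f False"
  by (simp add: UNIV_bool add.commute)

lemma sum_UNIV3: "(\<Sum>i\<in>(UNIV::(bool\<times>'x::finite\<times>'y::finite) set). f i)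
   = (\<Sum>t\<in>UNIV. \<Sum>x\<in>UNIV. \<Sum>y\<in>UNIV. f (t,x,y))"
proof -
  have "(UNIV::(bool\<times>'x\<times>'y) set) = UNIV \<times> (UNIV \<times> UNIV)" by simp
  then show ?thesis by (simp add: sum.cartesian_product)
qed

lemma sumY_pYT: "(\<Sum>y\<in>UNIV. pYT P y t) = pT P t"
  unfolding pYT_def pT_def by (rule sum.swap)

lemma sumX_pXT: "(\<Sum>x\<in>UNIV. pXT P x t) = pT P t"
  unfolding pXT_def pT_def by simp

lemma pXY_bool: "pXY Q x y = Q$(True,x,y) + Q$(False,x,y)"
  unfolding pXY_def by (simp add: sum_bool)

lemma pY_sum: "pY Q y = (\<Sum>x\<in>UNIV. pXY Q x y)"
  unfolding pY_def pXY_def by (rule sum.swap)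

lemma pY_bool: "pY Q y = pYT Q y True + pYT Q y False"
  unfolding pY_def pYT_def by (simp add: sum_bool)

lemma pX_bool: "pX Q x = pXT Q x True + pXT Q x False"
  unfolding pX_def pXT_def by (simp add: sum_bool)

lemma pX_sum: "pX Q x = (\<Sum>y\<in>UNIV. pXY Q x y)"
  unfolding pX_def pXY_def by (rule sum.swap)

lemma dist_nonneg: "is_dist Q \<Longrightarrow> 0 \<le> Q $ i"
  unfolding is_dist_def by (cases i) auto

lemma pXT_nonneg: "is_dist Q \<Longrightarrow> 0 \<le> pXT Q x t"
  unfolding pXT_def by (auto intro!: sum_nonneg dist_nonneg)
lemma pYT_nonneg: "is_dist Q \<Longrightarrow> 0 \<le> pYT Q y t"
  unfolding pYT_def by (auto intro!: sum_nonneg dist_nonneg)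

lemma zero_from_pYT:
  assumes "Q \<in> Delta_P P" "pYT P y t = 0" shows "Q $ (t,x,y) = 0"
proof -
  have d: "is_dist Q" and e: "pYT Q y t = 0" using assms unfolding Delta_P_def by auto
  then have "(\<Sum>x\<in>UNIV. Q $ (t,x,y)) = 0" unfolding pYT_def by simp
  then show ?thesis using d by (subst (asm) sum_nonneg_eq_0_iff) (auto intro: dist_nonneg)
qed

lemma zero_from_pXT:
  assumes "Q \<in> Delta_P P" "pXT P x t = 0" shows "Q $ (t,x,y) = 0"
proof -
  have d: "is_dist Q" and e: "pXT Q x t = 0" using assms unfolding Delta_P_def by auto
  then have "(\<Sum>y\<in>UNIV. Q $ (t,x,y)) = 0" unfolding pXT_def by simp
  then show ?thesis using d by (subst (asm) sum_nonneg_eq_0_iff) (auto intro: dist_nonneg)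
qed

lemma sum_pT: "is_dist P \<Longrightarrow> (\<Sum>t\<in>UNIV. pT P t) = 1"
  unfolding is_dist_def pT_def using sum_UNIV3[of "\<lambda>i. P $ i"] by simp

lemma prod_in_Delta:
  assumes P: "is_dist P" and pos: "\<And>t. pT P t > 0"
  defines "R \<equiv> (\<chi> i. case i of (t,x,y) \<Rightarrow> pXT P x t * pYT P y t / pT P t) :: ('x::finite,'y::finite) jdist"
  shows "R \<in> Delta_P P"
proof -
  have Ri: "R $ (t,x,y) = pXT P x t * pYT P y t / pT P t" for t x y unfolding R_def by simp
  have nn: "0 \<le> R $ i" for i
    using P pos[of "fst i"] by (cases i) (auto simp: Ri intro!: divide_nonneg_pos mult_nonneg_nonneg pXT_nonneg pYT_nonneg)
  have sx: "pXT R x t = pXT P x t" for x t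
  proof -
    have "pXT R x t = (\<Sum>y\<in>UNIV. pXT P x t * pYT P y t / pT P t)" by (simp add: pXT_def[of R] Ri)
    also have "\<dots> = pXT P x t * (\<Sum>y\<in>UNIV. pYT P y t) / pT P t"
      by (simp add: sum_divide_distrib[symmetric] sum_distrib_left)
    also have "\<dots> = pXT P x t" using pos[of t] by (simp add: sumY_pYT)
    finally show ?thesis .
  qed
  have sy: "pYT R y t = pYT P y t" for y t
  proof -
    have "pYT R y t = (\<Sum>x\<in>UNIV. pXT P x t * pYT P y t / pT P t)" by (simp add: pYT_def[of R] Ri)
    also have "\<dots> = (\<Sum>x\<in>UNIV. pXT P x t) * pYT P y t / pT P t"
      by (simp add: sum_divide_distrib[symmetric] sum_distrib_right)
    also have "\<dots> = pYT P y t" using pos[of t] by (simp add: sumX_pXT)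
    finally show ?thesis .
  qed
  have "(\<Sum>i\<in>UNIV. R $ i) = (\<Sum>t\<in>UNIV. \<Sum>x\<in>UNIV. pXT R x t)"
    by (simp add: sum_UNIV3 pXT_def)
  also have "\<dots> = 1" using P by (simp add: sx sumX_pXT sum_pT)
  finally show ?thesis unfolding Delta_P_def is_dist_def using nn sx sy by auto
qed

lemma relint_pos:
  fixes P Q :: "('x::finite,'y::finite) jdist"
  assumes P: "is_dist P" and pos: "\<And>t. pT P t > 0"
    and Q: "Q \<in> rel_interior (Delta_P P)"
    and px: "pXT P x t > 0" and py: "pYT P y t > 0"
  shows "Q $ (t,x,y) > 0"
proof -
  define R where "R = ((\<chi> i. case i of (t,x,y) \<Rightarrow> pXT P x t * pYT P y t / pT P t) :: ('x,'y) jdist)"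
  have R: "R \<in> Delta_P P" unfolding R_def by (rule prod_in_Delta[OF P pos])
  have Ri: "R $ (t,x,y) > 0" unfolding R_def using px py pos[of t] by simp
  from Q obtain e where e: "e > 0" "ball Q e \<inter> affine hull (Delta_P P) \<subseteq> Delta_P P"
    and QD: "Q \<in> Delta_P P"
    unfolding mem_rel_interior_ball by blast
  define \<delta> where "\<delta> = e / (2 * (norm (R - Q) + 1))"
  have dpos: "\<delta> > 0" using e unfolding \<delta>_def by (intro divide_pos_pos) (auto intro: add_nonneg_pos)
  define Z where "Z = (1 + \<delta>) *\<^sub>R Q + (- \<delta>) *\<^sub>R R"
  have "Z \<in> affine hull (Delta_P P)" unfolding Z_def
    by (rule mem_affine[OF affine_affine_hull]) (use QD R hull_inc in auto)
  moreover have "dist Q Z < e"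
  proof -
    have "Q - Z = \<delta> *\<^sub>R (R - Q)" unfolding Z_def by (simp add: algebra_simps)
    then have "dist Q Z = \<delta> * norm (R - Q)" using dpos by (simp add: dist_norm)
    also have "\<dots> < e"
    proof -
      have n0: "norm (R - Q) \<ge> 0" by simp
      have "norm (R - Q) / (2 * (norm (R - Q) + 1)) < 1" using n0 by (simp add: divide_less_eq) (smt (verit) norm_ge_zero)
      then have "e * (norm (R - Q) / (2 * (norm (R - Q) + 1))) < e * 1"
        using e(1) by (intro mult_strict_left_mono) auto
      then show ?thesis unfolding \<delta>_def by (simp add: field_simps)
    qed
    finally show ?thesis .
  qed
  ultimately have "Z \<in> Delta_P P" using e by auto
  then have "0 \<le> Z $ (t,x,y)" unfolding Delta_P_def using dist_nonneg by blast
  then have "\<delta> * R $ (t,x,y) \<le> (1 + \<delta>) * Q $ (t,x,y)" unfolding Z_def by simp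
  moreover have "\<delta> * R $ (t,x,y) > 0" using dpos Ri by simp
  ultimately have "(1 + \<delta>) * Q $ (t,x,y) > 0" by linarith
  then show ?thesis using dpos by (simp add: zero_less_mult_iff)
qed

definition gg :: "real \<Rightarrow> real \<Rightarrow> real" where
  "gg q s = (if q = 0 then 0 else q * log 2 (q / s))"
definition KK :: "real \<Rightarrow> real \<Rightarrow> real" where
  "KK a b = - (gg a (a + b) + gg b (a + b))"
definition FF :: "real \<Rightarrow> real \<Rightarrow> real" where
  "FF a b = a * ln a + b * ln b - (a + b) * ln (a + b)"

lemma KK_sym: "KK a b = KK b a" unfolding KK_def by (simp add: add.commute)
lemma KK_zero1: "KK a 0 = 0" unfolding KK_def gg_def by simp
lemma KK_zero2: "KK 0 b = 0" unfolding KK_def gg_def by simp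
lemma KK_pos: "a > 0 \<Longrightarrow> b > 0 \<Longrightarrow> KK a b = - FF a b / ln 2"
  unfolding KK_def gg_def FF_def log_def
  by (simp add: ln_div field_simps)

lemma H_decomp: "cond_entropy_T_XY Q = (\<Sum>x\<in>UNIV. \<Sum>y\<in>UNIV. KK (Q$(True,x,y)) (Q$(False,x,y)))"
proof -
  have "cond_entropy_T_XY Q = - (\<Sum>t\<in>UNIV. \<Sum>x\<in>UNIV. \<Sum>y\<in>UNIV. gg (Q$(t,x,y)) (pXY Q x y))"
    unfolding cond_entropy_T_XY_def gg_def by (subst sum_UNIV3) simp
  also have "\<dots> = (\<Sum>x\<in>UNIV. \<Sum>y\<in>UNIV. KK (Q$(True,x,y)) (Q$(False,x,y)))"
    unfolding KK_def sum_bool pXY_bool by (simp add: sum.distrib sum_negf sum_subtractf)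
  finally show ?thesis .
qed

lemma H_decomp_t: "cond_entropy_T_XY Q = (\<Sum>x\<in>UNIV. \<Sum>y\<in>UNIV. KK (Q$(t0,x,y)) (Q$(\<not>t0,x,y)))"
  using H_decomp[of Q] by (cases t0) (simp_all add: KK_sym)

lemma FF_deriv:
  assumes "u > 0" "v > 0"
  shows "((\<lambda>s. FF (u + c * s) v) has_real_derivative (c * (ln u - ln (u + v)))) (at 0)"
proof -
  have uv: "u + v > 0" using assms by simp
  show ?thesis unfolding FF_def using assms uv
  by (auto intro!: derivative_eq_intros simp: divide_simps) (simp add: algebra_simps)
qed

definition ind :: "'a \<Rightarrow> 'b \<Rightarrow> 'a \<Rightarrow> 'b \<Rightarrow> real" where
  "ind u v x y = (if x = u \<and> y = v then 1 else 0)"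

lemma ind_sumY: "(\<Sum>y\<in>(UNIV::'b::finite set). ind u v x y) = (if x = u then 1 else 0)"
  unfolding ind_def by (cases "x = u") auto
lemma ind_sumX: "(\<Sum>x\<in>(UNIV::'a::finite set). ind u v x y) = (if y = v then 1 else 0)"
  unfolding ind_def by (cases "y = v") auto

lemma key:
  fixes P Q :: "('x::finite,'y::finite) jdist"
  assumes P: "is_dist P" and pos: "\<And>t. pT P t > 0"
    and Qr: "Q \<in> rel_interior (Delta_P P)"
    and opt: "\<forall>Q'\<in>Delta_P P. cond_entropy_T_XY Q' \<le> cond_entropy_T_XY Q"
    and y0a: "pYT P y0 t0 > 0" and y0b: "pYT P y0 (\<not>t0) = 0"
    and hx: "\<And>t. pXT P x t > 0" and hx': "\<And>t. pXT P x' t > 0" and hy: "\<And>t. pYT P y t > 0"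
  shows "Q$(t0,x,y) / pXY Q x y = Q$(t0,x',y) / pXY Q x' y"
proof (cases "x = x'")
  case True then show ?thesis by simp
next
  case xx: False
  have QD: "Q \<in> Delta_P P" using Qr rel_interior_subset by blast
  have yy: "y \<noteq> y0" using hy[of "\<not>t0"] y0b by auto
  have posQ: "\<And>t x1 y1. pXT P x1 t > 0 \<Longrightarrow> pYT P y1 t > 0 \<Longrightarrow> Q$(t,x1,y1) > 0"
    using relint_pos[OF P pos Qr] by blast
  define a where "a = Q$(t0,x,y)"
  define b where "b = Q$(\<not>t0,x,y)"
  define a' where "a' = Q$(t0,x',y)"
  define b' where "b' = Q$(\<not>t0,x',y)"
  define e0 where "e0 = Q$(t0,x,y0)"
  define e0' where "e0' = Q$(t0,x',y0)"
  have apos: "a > 0" "b > 0" "a' > 0" "b' > 0" "e0 > 0" "e0' > 0"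
    unfolding a_def b_def a'_def b'_def e0_def e0'_def using posQ hx hx' hy y0a by auto
  have z0: "\<And>x1. Q$(\<not>t0,x1,y0) = 0" using zero_from_pYT[OF QD y0b] .
  have Qnn: "\<And>i. Q $ i \<ge> 0" using QD unfolding Delta_P_def by (auto intro: dist_nonneg)
  define m where "m = min (min a a') (min e0 e0')"
  have mpos: "m > 0" unfolding m_def using apos by simp
  define dd where "dd = (\<lambda>t x1 y1. if t = t0 then ind x y0 x1 y1 - ind x' y0 x1 y1 - ind x y x1 y1 + ind x' y x1 y1 else (0::real))"
  define Qe where "Qe = (\<lambda>\<epsilon>. (\<chi> i. case i of (t,x1,y1) \<Rightarrow> Q$(t,x1,y1) + \<epsilon> * dd t x1 y1) :: ('x,'y) jdist)"
  have Qe_i: "Qe \<epsilon> $ (t,x1,y1) = Q$(t,x1,y1) + \<epsilon> * dd t x1 y1" for \<epsilon> t x1 y1 by (simp add: Qe_def)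
  have ddY: "(\<Sum>y1\<in>UNIV. dd t x1 y1) = 0" for t x1
    unfolding dd_def by (cases "t = t0") (simp_all add: sum.distrib sum_subtractf ind_sumY)
  have ddX: "(\<Sum>x1\<in>UNIV. dd t x1 y1) = 0" for t y1
    unfolding dd_def by (cases "t = t0") (simp_all add: sum.distrib sum_subtractf ind_sumX)
  have inD: "Qe \<epsilon> \<in> Delta_P P" if eps: "\<bar>\<epsilon>\<bar> < m" for \<epsilon>
  proof -
    have nn: "0 \<le> Qe \<epsilon> $ i" for i
    proof (cases i)
      case (fields t x1 y1)
      have ma: "m \<le> a" "m \<le> a'" "m \<le> e0" "m \<le> e0'" unfolding m_def by auto
      show ?thesis
      proof (cases "t = t0")
        case False then show ?thesis using Qnn by (simp add: fields Qe_i dd_def)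
      next
        case True
        show ?thesis using Qnn[of "(t,x1,y1)"] eps ma xx yy
          unfolding fields Qe_i dd_def ind_def a_def a'_def e0_def e0'_def True
          by (auto split: if_splits)
      qed
    qed
    have sm: "(\<Sum>i\<in>UNIV. Qe \<epsilon> $ i) = 1"
    proof -
      have "(\<Sum>i\<in>UNIV. Qe \<epsilon> $ i) = (\<Sum>i\<in>UNIV. Q $ i) + \<epsilon> * (\<Sum>t\<in>UNIV. \<Sum>x1\<in>UNIV. \<Sum>y1\<in>UNIV. dd t x1 y1)"
        by (simp add: sum_UNIV3[of "\<lambda>i. Qe \<epsilon> $ i"] sum_UNIV3[of "\<lambda>i. Q $ i"] Qe_i sum.distrib sum_distrib_left)
      also have "\<dots> = 1" using QD unfolding Delta_P_def is_dist_def by (simp add: ddY)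
      finally show ?thesis .
    qed
    have mx: "pXT (Qe \<epsilon>) x1 t = pXT P x1 t" for x1 t
    proof -
      have "pXT (Qe \<epsilon>) x1 t = pXT Q x1 t + \<epsilon> * (\<Sum>y1\<in>UNIV. dd t x1 y1)"
        by (simp add: pXT_def Qe_i sum.distrib sum_distrib_left)
      then show ?thesis using QD unfolding Delta_P_def by (simp add: ddY)
    qed
    have my: "pYT (Qe \<epsilon>) y1 t = pYT P y1 t" for y1 t
    proof -
      have "pYT (Qe \<epsilon>) y1 t = pYT Q y1 t + \<epsilon> * (\<Sum>x1\<in>UNIV. dd t x1 y1)"
        by (simp add: pYT_def Qe_i sum.distrib sum_distrib_left)
      then show ?thesis using QD unfolding Delta_P_def by (simp add: ddX)
    qed
    show ?thesis unfolding Delta_P_def is_dist_def using nn sm mx my by auto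
  qed
  have dd_xy: "dd t0 x y = -1" "dd t0 x' y = 1" "dd (\<not>t0) x1 y1 = 0" for x1 y1
    unfolding dd_def ind_def using xx yy by auto
  have dd_other: "dd t0 x1 y1 = 0" if "y1 \<noteq> y0" "\<not>(x1 = x \<and> y1 = y)" "\<not>(x1 = x' \<and> y1 = y)" for x1 y1
    unfolding dd_def ind_def using that by auto
  define G where "G = (\<lambda>\<epsilon>. FF (a + (-1) * \<epsilon>) b + FF (a' + 1 * \<epsilon>) b')"
  have Hexp: "cond_entropy_T_XY (Qe \<epsilon>) = cond_entropy_T_XY Q - (G \<epsilon> - G 0) / ln 2"
    if eps: "\<bar>\<epsilon>\<bar> < m" for \<epsilon>
  proof -
    have ma: "m \<le> a" "m \<le> a'" unfolding m_def by auto
    define A where "A = KK (a - \<epsilon>) b - KK a b"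
    define B where "B = KK (a' + \<epsilon>) b' - KK a' b'"
    have trm: "KK (Qe \<epsilon> $ (t0,x1,y1)) (Qe \<epsilon> $ (\<not>t0,x1,y1)) - KK (Q $ (t0,x1,y1)) (Q $ (\<not>t0,x1,y1))
       = A * ind x y x1 y1 + B * ind x' y x1 y1" for x1 y1
    proof (cases "y1 = y0")
      case True
      then show ?thesis using z0[of x1] yy by (simp add: Qe_i dd_xy KK_zero1 ind_def)
    next
      case False
      show ?thesis
      proof (cases "x1 = x \<and> y1 = y")
        case True
        then show ?thesis using xx by (auto simp: Qe_i dd_xy ind_def A_def a_def b_def)
      next
        case F2: False
        show ?thesis
        proof (cases "x1 = x' \<and> y1 = y")
          case True
          then show ?thesis using xx by (auto simp: Qe_i dd_xy ind_def B_def a'_def b'_def)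
        next
          case False
          then show ?thesis using F2 \<open>y1 \<noteq> y0\<close> by (auto simp: Qe_i dd_xy dd_other ind_def)
        qed
      qed
    qed
    have "cond_entropy_T_XY (Qe \<epsilon>) - cond_entropy_T_XY Q
       = (\<Sum>x1\<in>UNIV. \<Sum>y1\<in>UNIV. A * ind x y x1 y1 + B * ind x' y x1 y1)"
      unfolding H_decomp_t[of "Qe \<epsilon>" t0] H_decomp_t[of Q t0]
      by (simp add: sum_subtractf[symmetric] trm)
    also have "\<dots> = A + B"
      by (simp add: sum.distrib sum_distrib_left[symmetric] ind_sumY)
    also have "\<dots> = - (G \<epsilon> - G 0) / ln 2"
    proof -
      have "a - \<epsilon> > 0" "a' + \<epsilon> > 0" using eps ma by auto
      then show ?thesis unfolding A_def B_def G_def using apos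
        by (simp add: KK_pos field_simps)
    qed
    finally show ?thesis by (simp add: diff_divide_distrib algebra_simps)
  qed
  have Gmin: "\<forall>e. \<bar>0 - e\<bar> < m \<longrightarrow> G 0 \<le> G e"
  proof (intro allI impI)
    fix e assume "\<bar>0 - e\<bar> < m"
    then have e: "\<bar>e\<bar> < m" by simp
    have "cond_entropy_T_XY (Qe e) \<le> cond_entropy_T_XY Q" using opt inD[OF e] by blast
    then have "(G e - G 0) / ln 2 \<ge> 0" using Hexp[OF e] by simp
    then show "G 0 \<le> G e" by (simp add: zero_le_divide_iff)
  qed
  have "DERIV G 0 :> ((-1) * (ln a - ln (a + b)) + 1 * (ln a' - ln (a' + b')))"
    unfolding G_def by (intro DERIV_add FF_deriv) (use apos in auto)
  then have "(-1) * (ln a - ln (a + b)) + 1 * (ln a' - ln (a' + b')) = 0"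
    using DERIV_local_min[OF _ mpos Gmin] by blast
  then have "ln (a / (a + b)) = ln (a' / (a' + b'))" using apos by (simp add: ln_div)
  then have eq: "a / (a + b) = a' / (a' + b')" using apos by simp
  have "pXY Q x y = a + b" "pXY Q x' y = a' + b'"
    unfolding a_def b_def a'_def b'_def pXY_bool by (cases t0; simp)+
  then show ?thesis using eq unfolding a_def a'_def by simp
qed

lemma supp_X_eq: "is_dist P \<Longrightarrow> pT P t > 0 \<Longrightarrow> x \<in> supp_X P t \<longleftrightarrow> pXT P x t > 0"
  unfolding supp_X_def by (simp add: zero_less_divide_iff)
lemma supp_Y_eq: "is_dist P \<Longrightarrow> pT P t > 0 \<Longrightarrow> y \<in> supp_Y P t \<longleftrightarrow> pYT P y t > 0"
  unfolding supp_Y_def by (simp add: zero_less_divide_iff)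

lemma pXY_Q_t: "pXY Q x y = Q$(t0,x,y) + Q$(\<not>t0,x,y)"
  unfolding pXY_bool by (cases t0) simp_all
lemma pY_Q_t: "pY Q y = pYT Q y t0 + pYT Q y (\<not>t0)"
  unfolding pY_bool by (cases t0) simp_all

lemma half1:
  fixes P Q :: "('x::finite,'y::finite) jdist"
  assumes P: "is_dist P" and pos: "\<And>t. pT P t > 0"
    and Qr: "Q \<in> rel_interior (Delta_P P)"
    and opt: "\<forall>Q'\<in>Delta_P P. cond_entropy_T_XY Q' \<le> cond_entropy_T_XY Q"
    and sx: "supp_X P False = supp_X P True" and sy: "supp_Y P False \<noteq> supp_Y P True"
  shows "indep_T_X_given_Y Q"
proof -
  have QD: "Q \<in> Delta_P P" using Qr rel_interior_subset by blast
  have Qnn: "\<And>i. Q $ i \<ge> 0" using QD unfolding Delta_P_def by (auto intro: dist_nonneg)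
  have mX: "\<And>x t. pXT Q x t = pXT P x t" and mY: "\<And>y t. pYT Q y t = pYT P y t"
    using QD unfolding Delta_P_def by auto
  have xs: "\<And>x. pXT P x False > 0 \<longleftrightarrow> pXT P x True > 0"
    using sx supp_X_eq[OF P pos] by blast
  obtain y0 t0 where y0a: "pYT P y0 t0 > 0" and y0b: "pYT P y0 (\<not>t0) = 0"
  proof -
    obtain y0 where "y0 \<in> supp_Y P False \<longleftrightarrow> y0 \<notin> supp_Y P True" using sy by blast
    then have "(pYT P y0 False > 0 \<and> \<not> pYT P y0 True > 0) \<or> (pYT P y0 True > 0 \<and> \<not> pYT P y0 False > 0)"
      using supp_Y_eq[OF P pos] by blast
    moreover have "pYT P y0 t \<ge> 0" for t using P by (rule pYT_nonneg)
    moreover note that[of y0 False] that[of y0 True]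
    ultimately show ?thesis by (smt (verit) not_True_eq_False not_False_eq_True)
  qed
  show ?thesis unfolding indep_T_X_given_Y_def
  proof (intro allI)
    fix t x y
    show "Q $ (t, x, y) * pY Q y = pYT Q y t * pXY Q x y"
    proof (cases "pXT P x True > 0")
      case False
      then have "pXT P x t' = 0" for t' using xs[of x] pXT_nonneg[OF P, of x t'] by (cases t') auto
      then have "Q $ (t',x,y) = 0" for t' using zero_from_pXT[OF QD] by blast
      then show ?thesis by (simp add: pXY_bool)
    next
      case hxT: True
      have hx: "pXT P x t' > 0" for t' using xs hxT by (cases t') auto
      show ?thesis
      proof (cases "\<exists>s. pYT P y s = 0")
        case True
        then obtain s where s: "pYT P y s = 0" by blast
        have z: "Q $ (s,x1,y) = 0" for x1 using zero_from_pYT[OF QD s] .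
        have "pY Q y = pYT Q y (\<not>s)" using pY_Q_t[of Q y s] mY s by simp
        moreover have "pXY Q x y = Q $ (\<not>s,x,y)" using pXY_Q_t[of Q x y s] z by simp
        moreover have "t = s \<or> t = (\<not>s)" by auto
        ultimately show ?thesis using z mY s by (auto simp: mult.commute)
      next
        case False
        then have hy: "pYT P y s > 0" for s using pYT_nonneg[OF P, of y s] by (metis less_eq_real_def)
        define c where "c = Q$(t0,x,y) / pXY Q x y"
        have pxy_pos: "pXY Q x1 y > 0" if "pXT P x1 True > 0" for x1
        proof -
          have "pXT P x1 t' > 0" for t' using xs that by (cases t') auto
          then have "Q$(t',x1,y) > 0" for t' using relint_pos[OF P pos Qr] hy by blast
          then show ?thesis unfolding pXY_bool by (simp add: add_pos_pos)
        qed
        have lin: "Q$(t0,x1,y) = c * pXY Q x1 y" for x1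
        proof (cases "pXT P x1 True > 0")
          case True
          have hx1: "pXT P x1 t' > 0" for t' using xs True by (cases t') auto
          have "Q$(t0,x1,y) / pXY Q x1 y = c" unfolding c_def
            by (rule key[OF P pos Qr opt y0a y0b hx1 hx hy])
          then show ?thesis using pxy_pos[OF True] by (simp add: field_simps)
        next
          case False
          then have "pXT P x1 t' = 0" for t' using xs[of x1] pXT_nonneg[OF P, of x1 t'] by (cases t') auto
          then have "Q $ (t',x1,y) = 0" for t' using zero_from_pXT[OF QD] by blast
          then show ?thesis by (simp add: pXY_bool)
        qed
        have yt0: "pYT Q y t0 = c * pY Q y"
          unfolding pYT_def pY_sum by (simp add: lin sum_distrib_left)
        have yt1: "pYT Q y (\<not>t0) = (1 - c) * pY Q y" using pY_Q_t[of Q y t0] yt0 by (simp add: algebra_simps)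
        have xt1: "Q$(\<not>t0,x,y) = (1 - c) * pXY Q x y" using pXY_Q_t[of Q x y t0] lin[of x] by (simp add: algebra_simps)
        have "t = t0 \<or> t = (\<not>t0)" by auto
        moreover have "Q$(t0,x,y) * pY Q y = pYT Q y t0 * pXY Q x y"
          unfolding lin[of x] yt0 by simp
        moreover have "Q$(\<not>t0,x,y) * pY Q y = pYT Q y (\<not>t0) * pXY Q x y"
          unfolding xt1 yt1 by simp
        ultimately show ?thesis by blast
      qed
    qed
  qed
qed

definition tr :: "('x::finite,'y::finite) jdist \<Rightarrow> ('y,'x) jdist" where
  "tr Q = (\<chi> i. case i of (t,y,x) \<Rightarrow> Q $ (t,x,y))"

lemma tr_i[simp]: "tr Q $ (t,y,x) = Q $ (t,x,y)" unfolding tr_def by simp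
lemma tr_tr[simp]: "tr (tr Q) = Q" by (simp add: vec_eq_iff)
lemma tr_linear: "linear tr"
  by (rule linearI) (simp_all add: vec_eq_iff)
lemma tr_inj: "inj tr" by (metis injI tr_tr)

lemma tr_sum: "(\<Sum>i\<in>UNIV. tr Q $ i) = (\<Sum>i\<in>UNIV. Q $ i)"
proof -
  have "\<And>t. (\<Sum>y\<in>UNIV. \<Sum>x\<in>UNIV. Q $ (t,x,y)) = (\<Sum>x\<in>UNIV. \<Sum>y\<in>UNIV. Q $ (t,x,y))"
    by (rule sum.swap)
  then show ?thesis by (simp add: sum_UNIV3[of "\<lambda>i. tr Q $ i"] sum_UNIV3[of "\<lambda>i. Q $ i"])
qed

lemma tr_dist: "is_dist (tr Q) \<longleftrightarrow> is_dist Q"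
  unfolding is_dist_def tr_sum by (metis prod_cases3 tr_i)

lemma tr_pT[simp]: "pT (tr Q) t = pT Q t"
  unfolding pT_def using sum.swap[of "\<lambda>y x. Q$(t,x,y)" UNIV UNIV] by simp
lemma tr_pXT[simp]: "pXT (tr Q) y t = pYT Q y t" unfolding pXT_def pYT_def by simp
lemma tr_pYT[simp]: "pYT (tr Q) x t = pXT Q x t" unfolding pXT_def pYT_def by simp
lemma tr_pXY[simp]: "pXY (tr Q) y x = pXY Q x y" unfolding pXY_def by simp
lemma tr_pY[simp]: "pY (tr Q) x = pX Q x" unfolding pY_def pX_def by simp
lemma tr_supp_X: "supp_X (tr P) t = supp_Y P t" unfolding supp_X_def supp_Y_def by simp
lemma tr_supp_Y: "supp_Y (tr P) t = supp_X P t" unfolding supp_X_def supp_Y_def by simp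

lemma tr_Delta_mem: "tr Q \<in> Delta_P (tr P) \<longleftrightarrow> Q \<in> Delta_P P"
  unfolding Delta_P_def by (auto simp: tr_dist)

lemma tr_Delta: "Delta_P (tr P) = tr ` Delta_P P"
proof
  show "Delta_P (tr P) \<subseteq> tr ` Delta_P P"
  proof
    fix Q assume "Q \<in> Delta_P (tr P)"
    then have "tr Q \<in> Delta_P P" using tr_Delta_mem[of "tr Q" P] by simp
    then show "Q \<in> tr ` Delta_P P" by (metis image_eqI tr_tr)
  qed
  show "tr ` Delta_P P \<subseteq> Delta_P (tr P)" using tr_Delta_mem by blast
qed

lemma tr_H: "cond_entropy_T_XY (tr Q) = cond_entropy_T_XY Q"
  unfolding H_decomp using sum.swap[of "\<lambda>y x. KK (Q$(True,x,y)) (Q$(False,x,y))" UNIV UNIV] by simp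

lemma tr_indep: "indep_T_X_given_Y (tr Q) \<longleftrightarrow> indep_T_Y_given_X Q"
  unfolding indep_T_X_given_Y_def indep_T_Y_given_X_def by auto

lemma tr_relint: "rel_interior (Delta_P (tr P)) = tr ` rel_interior (Delta_P P)"
  unfolding tr_Delta
  by (rule rel_interior_injective_linear_image[OF linear_conv_bounded_linear[THEN iffD1, OF tr_linear] tr_inj])

lemma half2:
  fixes P Q :: "('x::finite,'y::finite) jdist"
  assumes P: "is_dist P" and pos: "\<And>t. pT P t > 0"
    and Qr: "Q \<in> rel_interior (Delta_P P)"
    and opt: "\<forall>Q'\<in>Delta_P P. cond_entropy_T_XY Q' \<le> cond_entropy_T_XY Q"
    and sy: "supp_Y P False = supp_Y P True" and sx: "supp_X P False \<noteq> supp_X P True"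
  shows "indep_T_Y_given_X Q"
proof -
  have "indep_T_X_given_Y (tr Q)"
  proof (rule half1)
    show "is_dist (tr P)" using P tr_dist by blast
    show "pT (tr P) t > 0" for t using pos by simp
    show "tr Q \<in> rel_interior (Delta_P (tr P))" using Qr tr_relint by blast
    show "\<forall>Q'\<in>Delta_P (tr P). cond_entropy_T_XY Q' \<le> cond_entropy_T_XY (tr Q)"
      using opt by (auto simp: tr_Delta tr_H)
    show "supp_X (tr P) False = supp_X (tr P) True" using sy by (simp add: tr_supp_X)
    show "supp_Y (tr P) False \<noteq> supp_Y (tr P) True" using sx by (simp add: tr_supp_Y)
  qed
  then show ?thesis by (simp add: tr_indep)
qed

theorem mainTheorem15:
  fixes P Qs :: "('x::finite, 'y::finite) jdist"
  assumes "is_dist P"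
    and "pT P False > 0" and "pT P True > 0"
    and "Qs \<in> Delta_P P"
    and "\<forall>Q\<in>Delta_P P. cond_entropy_T_XY Q \<le> cond_entropy_T_XY Qs"
    and "Qs \<in> rel_interior (Delta_P P)"
  shows "(supp_X P False = supp_X P True \<and> supp_Y P False \<noteq> supp_Y P True
            \<longrightarrow> indep_T_X_given_Y Qs)
       \<and> (supp_Y P False = supp_Y P True \<and> supp_X P False \<noteq> supp_X P True
            \<longrightarrow> indep_T_Y_given_X Qs)"
proof -
  have pos: "\<And>t. pT P t > 0" using assms(2,3) by (case_tac t) auto
  show ?thesis using half1[OF assms(1) pos assms(6) assms(5)] half2[OF assms(1) pos assms(6) assms(5)] by blast
qed

end
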